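(* Let ${\bf x}_1,\dots,{\bf x}_N\in\mathbb{C}^d$ be samples such that the sample covariance $\widehat{\bf C}=\frac1N\sum_{n=1}^N{\bf x}_n{\bf x}_n^H$ is invertible, and write $\hat{\rm E}[g({\bf x})]=\frac1N\sum_{n=1}^N g({\bf x}_n)$. Let $\phi:\mathbb{C}\to\mathbb{C}$ be any function and ${\bf w}\in\mathbb{C}^d\setminus\{{\bf 0}\}$. Put $\hat s_n={\bf w}^H{\bf x}_n$, $\hat\sigma=\sqrt{{\bf w}^H\widehat{\bf C}{\bf w}}$, ${\bf a}=\widehat{\bf C}{\bf w}/\hat\sigma^2$, $$\hat\nu=\hat{\rm E}\Big[\phi\Big(\frac{\hat s}{\hat\sigma}\Big)\frac{\hat s}{\hat\sigma}\Big],\qquad \nabla={\bf a}-\hat\nu^{-1}\hat{\rm E}\Big[\phi\Big(\frac{\hat s}{\hat\sigma}\Big)\frac{{\bf x}}{\hat\sigma}\Big],$$ and assume $\hat\nu\ne 0$. Then for every real $\lambda\neq1$ the matrix $\frac{\widehat{\bf C}}{\hat\sigma^2}-\lambda{\bf a}{\bf a}^H$ is invertible and $$\lim_{\lambda\to1}\Big(\frac{\widehat{\bf C}}{\hat\sigma^2}-\lambda{\bf a}{\bf a}^H\Big)^{-1}\nabla=\hat\sigma^2\,\widehat{\bf C}^{-1}\nabla.$$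
   Context: Here $\hat s=\hat s({\bf x})={\bf w}^H{\bf x}$ inside $\hat{\rm E}$. The vector ${\bf a}$ is the mixing vector linked to the separating vector ${\bf w}$ through the orthogonal constraint, and $\nabla$ is the normalized gradient used in one-unit FastDIVA; the matrix $\frac{\widehat{\bf C}}{\hat\sigma^2}-{\bf a}{\bf a}^H$ (the case $\lambda=1$) is rank deficient. *)

theory Defs
  imports "HOL-Analysis.Analysis"
begin

definition hdot :: "complex^'d \<Rightarrow> complex^'d \<Rightarrow> complex" where
  "hdot w x = (\<Sum>i\<in>UNIV. cnj (w $ i) * x $ i)"

definition houter :: "complex^'d \<Rightarrow> complex^'d \<Rightarrow> complex^'d^'d" where
  "houter a b = (\<chi> i j. a $ i * cnj (b $ j))"

text \<open>Sample covariance (1/N) sum_{n=1}^N x_n x_n^H, samples indexed by n < N.\<close>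
definition sample_cov :: "nat \<Rightarrow> (nat \<Rightarrow> complex^'d) \<Rightarrow> complex^'d^'d" where
  "sample_cov N x = (\<chi> i j. (\<Sum>n<N. x n $ i * cnj (x n $ j)) / of_nat N)"

definition emp_mean :: "nat \<Rightarrow> (nat \<Rightarrow> 'b) \<Rightarrow> ('b \<Rightarrow> 'c::real_vector) \<Rightarrow> 'c" where
  "emp_mean N x g = (1 / real N) *\<^sub>R (\<Sum>n<N. g (x n))"

end

theory Submission
  imports Defs
begin

lemma minv_props:
  fixes A :: "'a::field^'n^'n"
  assumes "invertible A"
  shows "A ** matrix_inv A = mat 1" "matrix_inv A ** A = mat 1"
  using someI_ex[OF assms[unfolded invertible_def]] unfolding matrix_inv_def by auto

lemma minv_apply:
  fixes A :: "'a::field^'n^'n"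
  assumes "invertible A"
  shows "matrix_inv A *v (A *v v) = v"
  by (simp add: matrix_vector_mul_assoc minv_props[OF assms])

lemma minv_apply2:
  fixes A :: "'a::field^'n^'n"
  assumes "invertible A"
  shows "A *v (matrix_inv A *v v) = v"
  by (simp add: matrix_vector_mul_assoc minv_props[OF assms])

lemma inv_of_ker:
  fixes A :: "'a::field^'n^'n"
  assumes "\<And>y. A *v y = 0 \<Longrightarrow> y = 0"
  shows "invertible A"
  using assms invertible_left_inverse matrix_left_invertible_ker by blast

lemma hdot_add: "hdot w (u + v) = hdot w u + hdot w v"
  by (simp add: hdot_def distrib_left sum.distrib)
lemma hdot_diff: "hdot w (u - v) = hdot w u - hdot w v"
  by (simp add: hdot_def right_diff_distrib sum_subtractf)
lemma hdot_smult: "hdot w (c *s v) = c * hdot w v"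
  by (simp add: hdot_def sum_distrib_left algebra_simps)
lemma hdot_smult_l: "hdot (c *s w) v = cnj c * hdot w v"
  by (simp add: hdot_def sum_distrib_left algebra_simps)
lemma hdot_scaleR: "hdot w (r *\<^sub>R v) = complex_of_real r * hdot w v"
proof -
  have "r *\<^sub>R v = complex_of_real r *s v"
    by (simp only: vec_eq_iff vector_scaleR_component vector_smult_component) (simp add: scaleR_conv_of_real)
  then show ?thesis by (simp add: hdot_smult)
qed
lemma hdot_sum: "hdot w (\<Sum>n\<in>A. f n) = (\<Sum>n\<in>A. hdot w (f n))"
  by (simp add: hdot_def sum_component sum_distrib_left) (rule sum.swap)
lemma hdot_emp: "hdot w (emp_mean N x g) = emp_mean N x (\<lambda>y. hdot w (g y))"
  unfolding emp_mean_def by (simp only: hdot_scaleR hdot_sum) (simp add: scaleR_conv_of_real)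

lemma hdot_cnj: "cnj (hdot u v) = hdot v u"
  by (simp add: hdot_def mult.commute)

lemma cov_herm: "cnj (sample_cov N x $ i $ j) = sample_cov N x $ j $ i"
  by (simp add: sample_cov_def mult.commute)

lemma hdot_adj:
  fixes C :: "complex^'d^'d"
  assumes "\<And>i j. cnj (C $ i $ j) = C $ j $ i"
  shows "hdot (C *v u) v = hdot u (C *v v)"
proof -
  have "hdot (C *v u) v = (\<Sum>i\<in>UNIV. \<Sum>j\<in>UNIV. C $ j $ i * cnj (u $ j) * v $ i)"
    by (simp add: hdot_def matrix_vector_mult_def sum_distrib_right sum_distrib_left assms mult.commute mult.left_commute)
  also have "\<dots> = (\<Sum>j\<in>UNIV. \<Sum>i\<in>UNIV. cnj (u $ j) * (C $ j $ i * v $ i))"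
    by (subst sum.swap) (simp add: mult_ac)
  also have "\<dots> = hdot u (C *v v)"
    by (simp add: hdot_def matrix_vector_mult_def sum_distrib_left)
  finally show ?thesis .
qed

lemma covw:
  "sample_cov N x *v w = (1 / of_nat N) *s (\<Sum>n<N. cnj (hdot w (x n)) *s x n)"
proof -
  have "(sample_cov N x *v w) $ i = ((1 / of_nat N) *s (\<Sum>n<N. cnj (hdot w (x n)) *s x n)) $ i" for i
  proof -
    have "(sample_cov N x *v w) $ i = (\<Sum>j\<in>UNIV. \<Sum>n<N. x n $ i * cnj (x n $ j) * w $ j / of_nat N)"
      by (simp add: matrix_vector_mult_def sample_cov_def sum_divide_distrib sum_distrib_right)
    also have "\<dots> = (\<Sum>n<N. \<Sum>j\<in>UNIV. x n $ i * cnj (x n $ j) * w $ j / of_nat N)"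
      by (rule sum.swap)
    also have "\<dots> = ((1 / of_nat N) *s (\<Sum>n<N. cnj (hdot w (x n)) *s x n)) $ i"
      by (simp add: sum_component hdot_def sum_distrib_left sum_distrib_right sum_divide_distrib mult_ac)
    finally show ?thesis .
  qed
  then show ?thesis by (simp add: vec_eq_iff)
qed

theorem proposition2:
  fixes N :: nat and x :: "nat \<Rightarrow> complex^'d" and \<phi> :: "complex \<Rightarrow> complex"
    and w :: "complex^'d"
  defines "C \<equiv> sample_cov N x"
  defines "\<sigma> \<equiv> sqrt (Re (hdot w (C *v w)))"
  defines "a \<equiv> (complex_of_real (1 / \<sigma>\<^sup>2)) *s (C *v w)"
  defines "\<nu> \<equiv> emp_mean N x (\<lambda>y. \<phi> (hdot w y / complex_of_real \<sigma>) * (hdot w y / complex_of_real \<sigma>))"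
  defines "grad \<equiv> a - (1 / \<nu>) *s emp_mean N x (\<lambda>y. \<phi> (hdot w y / complex_of_real \<sigma>) *s
                       ((1 / complex_of_real \<sigma>) *s y))"
  defines "M \<equiv> (\<lambda>t::real. (\<chi> i j. C $ i $ j / complex_of_real (\<sigma>\<^sup>2) - complex_of_real t * houter a a $ i $ j))"
  assumes "invertible C"
    and "w \<noteq> 0"
    and "\<nu> \<noteq> 0"
  shows "(\<forall>t::real. t \<noteq> 1 \<longrightarrow> invertible (M t)) \<and>
         ((\<lambda>t. matrix_inv (M t) *v grad) \<longlongrightarrow> complex_of_real (\<sigma>\<^sup>2) *s (matrix_inv C *v grad)) (at 1)"
proof -
  note inv = assms(7)
  have herm: "\<And>i j. cnj (C$i$j) = C$j$i" by (simp add: C_def cov_herm)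
  have adj: "\<And>u v. hdot (C *v u) v = hdot u (C *v v)" using hdot_adj[OF herm] .
  have Cinj: "\<And>y. C *v y = 0 \<Longrightarrow> y = 0" using minv_apply[OF inv] by (metis matrix_vector_mult_0_right)
  define h where "h n = hdot w (x n)" for n
  have Cw: "C *v w = (1 / of_nat N) *s (\<Sum>n<N. cnj (h n) *s x n)"
    unfolding C_def h_def by (rule covw)
  define q where "q = (\<Sum>n<N. (cmod (h n))^2) / real N"
  have hq: "hdot w (C *v w) = complex_of_real q"
  proof -
    have "hdot w (C *v w) = (1 / of_nat N) * (\<Sum>n<N. cnj (h n) * h n)"
      by (simp add: Cw hdot_smult hdot_sum h_def)
    also have "(\<Sum>n<N. cnj (h n) * h n) = complex_of_real (\<Sum>n<N. (cmod (h n))^2)"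
      unfolding of_real_sum
    proof (rule sum.cong)
      fix n show "cnj (h n) * h n = complex_of_real ((cmod (h n))^2)"
        by (metis complex_norm_square mult.commute of_real_power)
    qed simp
    also have "(1 / of_nat N) * complex_of_real (\<Sum>n<N. (cmod (h n))^2) = complex_of_real q"
      by (simp add: q_def divide_inverse mult.commute)
    finally show ?thesis .
  qed
  have q0: "q \<ge> 0" unfolding q_def by (simp add: sum_nonneg)
  have qpos: "q > 0"
  proof (rule ccontr)
    assume "\<not> q > 0"
    then have "q = 0" using q0 by simp
    have "C *v w = 0"
    proof (cases "N = 0")
      case True then show ?thesis by (simp add: Cw)
    next
      case False
      then have "(\<Sum>n<N. (cmod (h n))^2) = 0" using \<open>q = 0\<close> by (simp add: q_def)
      then have "\<forall>n\<in>{..<N}. (cmod (h n))^2 = 0"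
        by (subst sum_nonneg_eq_0_iff[symmetric]) auto
      then have "\<forall>n\<in>{..<N}. h n = 0" by simp
      then show ?thesis by (simp add: Cw)
    qed
    then show False using Cinj assms(8) by blast
  qed
  define s2 where "s2 = \<sigma>^2"
  have s2q: "s2 = q" unfolding s2_def \<sigma>_def hq using q0 by simp
  have s2pos: "s2 > 0" using s2q qpos by simp
  have hCw: "hdot w (C *v w) = complex_of_real s2" using hq s2q by simp
  have a_def': "a = complex_of_real (1 / s2) *s (C *v w)" by (simp add: a_def s2_def)
  have haw: "hdot a w = 1"
    using s2pos by (simp add: a_def' hdot_smult_l adj hCw)
  have hwa: "hdot w a = 1"
    using s2pos by (simp add: a_def' hdot_smult hCw)
  have hwE: "hdot w (emp_mean N x (\<lambda>y. \<phi> (hdot w y / complex_of_real \<sigma>) *s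
                       ((1 / complex_of_real \<sigma>) *s y))) = \<nu>"
    unfolding hdot_emp \<nu>_def by (simp add: hdot_smult)
  have hwg: "hdot w grad = 0"
    unfolding grad_def hdot_diff hdot_smult hwE hwa using assms(9) by simp
  have Mv: "M t *v y = complex_of_real (1 / s2) *s (C *v y) - (complex_of_real t * hdot a y) *s a" for t y
    by (simp add: vec_eq_iff M_def matrix_vector_mult_def houter_def hdot_def s2_def
        sum_subtractf sum_distrib_left divide_inverse algebra_simps)
  have Minv: "invertible (M t)" if "t \<noteq> 1" for t
  proof (rule inv_of_ker)
    fix y assume "M t *v y = 0"
    define c where "c = hdot a y"
    have "complex_of_real (1 / s2) *s (C *v y) = (complex_of_real t * c) *s a"
      using \<open>M t *v y = 0\<close> unfolding Mv c_def by simp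
    then have "complex_of_real s2 *s (complex_of_real (1 / s2) *s (C *v y)) =
        complex_of_real s2 *s ((complex_of_real t * c) *s a)" by simp
    then have "C *v y = (complex_of_real t * c) *s (C *v w)"
      using s2pos by (simp add: vector_smult_assoc a_def' mult_ac)
    then have "C *v (y - (complex_of_real t * c) *s w) = 0"
      by (simp add: matrix_vector_mult_diff_distrib vector_scalar_commute)
    then have "y - (complex_of_real t * c) *s w = 0" using Cinj by blast
    then have yeq: "y = (complex_of_real t * c) *s w" by simp
    then have "c = complex_of_real t * c" unfolding c_def
      using haw by (metis hdot_smult mult.right_neutral)
    then have "c = 0" using that
      by (metis mult_cancel_right1 of_real_eq_1_iff)
    then show "y = 0" using yeq by simp
  qed
  define v where "v = complex_of_real s2 *s (matrix_inv C *v grad)"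
  have Cv: "C *v v = complex_of_real s2 *s grad"
    by (simp add: v_def vector_scalar_commute minv_apply2[OF inv])
  have hav: "hdot a v = 0"
    by (simp add: a_def' hdot_smult_l adj Cv hdot_smult hwg)
  have Mvv: "M t *v v = grad" for t
    using s2pos by (simp add: Mv Cv hav vector_smult_assoc)
  have eq: "matrix_inv (M t) *v grad = v" if "t \<noteq> 1" for t
    using minv_apply[OF Minv[OF that], of v] Mvv by simp
  have lim: "((\<lambda>t. matrix_inv (M t) *v grad) \<longlongrightarrow> v) (at 1)"
  proof (rule Lim_transform_eventually[OF tendsto_const])
    show "\<forall>\<^sub>F t in at (1::real). v = matrix_inv (M t) *v grad"
      by (simp add: eventually_at_filter eq)
  qed
  show ?thesis using Minv lim by (simp add: v_def s2_def)
qed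

end
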